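(* Let $X$ be an infinite set and $X\subseteq Y$. Then the map $\pi:S_\infty(Y)\to I(X)$, $\pi(f)=\widehat f$, is onto if and only if $|X|\le|Y\setminus X|$.
   Context: $S_\infty(Y)$ is the group of all bijections $Y\to Y$. $I(X)$ is the set of all bijections $f:A\to B$ with $A,B\subseteq X$ (including the empty map). For $f\in S_\infty(Y)$, $\widehat f=\{(x,f(x)): x\in X,\ f(x)\in X\}\in I(X)$, i.e. the restriction of $f$ to $X\cap f^{-1}(X)$. *)

theory Defs
  imports "HOL-Library.Equipollence"
begin

text \<open>S_infinity(Y): all bijections Y to Y (values outside Y are irrelevant).\<close>
definition sym_group :: "'a set \<Rightarrow> ('a \<Rightarrow> 'a) set" where
  "sym_group Y = {f. bij_betw f Y Y}"

definition partial_bijections :: "'a set \<Rightarrow> ('a \<times> 'a) set set" where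
  "partial_bijections X =
     {R. \<exists>A B f. A \<subseteq> X \<and> B \<subseteq> X \<and> bij_betw f A B \<and> R = {(x, f x) | x. x \<in> A}}"

definition restr_hat :: "'a set \<Rightarrow> ('a \<Rightarrow> 'a) \<Rightarrow> ('a \<times> 'a) set" where
  "restr_hat X f = {(x, f x) | x. x \<in> X \<and> f x \<in> X}"

end

theory Submission
  imports Defs
begin

unbundle cardinal_syntax

lemma lepoll_card_of: "A \<lesssim> B \<longleftrightarrow> |A| \<le>o |B|"
  unfolding lepoll_def by (simp add: card_of_ordLeq[symmetric])

lemma Un_lepoll_infinite:
  assumes "infinite Z" "S \<lesssim> Z" "T \<lesssim> Z"
  shows "S \<union> T \<lesssim> Z"
proof -
  have "|S \<union> T| \<le>o |Z|"
    using card_of_Un_ordLeq_infinite_Field[of "|Z|" S T] assms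
    by (simp add: Field_card_of card_of_Card_order card_of_card_order_on lepoll_card_of)
  thus ?thesis by (simp add: lepoll_card_of)
qed

lemma split_infinite:
  assumes "infinite (Z::'a set)"
  shows "\<exists>Z1 Z2. Z1 \<subseteq> Z \<and> Z2 \<subseteq> Z \<and> Z1 \<inter> Z2 = {} \<and> Z \<lesssim> Z1 \<and> Z \<lesssim> Z2"
proof -
  have "|Z <+> Z| =o |Z|" using card_of_Plus_infinite1[of Z Z] assms ordLeq_refl[OF card_of_Card_order] by blast
  then obtain p where p: "bij_betw p (Z <+> Z) Z" using card_of_ordIso by blast
  let ?Z1 = "p ` Inl ` Z" and ?Z2 = "p ` Inr ` Z"
  have "?Z1 \<subseteq> Z" "?Z2 \<subseteq> Z" using p by (auto simp: bij_betw_def)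
  moreover have "?Z1 \<inter> ?Z2 = {}"
    using p unfolding bij_betw_def inj_on_def by fastforce
  moreover have "Z \<lesssim> ?Z1"
    unfolding lepoll_def
    by (rule exI[of _ "p \<circ> Inl"]) (use p in \<open>auto simp: bij_betw_def inj_on_def\<close>)
  moreover have "Z \<lesssim> ?Z2"
    unfolding lepoll_def
    by (rule exI[of _ "p \<circ> Inr"]) (use p in \<open>auto simp: bij_betw_def inj_on_def\<close>)
  ultimately show ?thesis by blast
qed

theorem proposition6p1:
  fixes X Y :: "'a set"
  assumes "infinite X" and "X \<subseteq> Y"
  shows "(\<forall>R \<in> partial_bijections X. \<exists>f \<in> sym_group Y. restr_hat X f = R)
         \<longleftrightarrow> X \<lesssim> Y - X"
proof
  assume H: "\<forall>R \<in> partial_bijections X. \<exists>f \<in> sym_group Y. restr_hat X f = R"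
  have "{} \<in> partial_bijections X"
    unfolding partial_bijections_def by (rule CollectI, rule exI[of _ "{}"], auto)
  then obtain f where f: "bij_betw f Y Y" "restr_hat X f = {}"
    using H by (auto simp: sym_group_def)
  have "\<forall>x\<in>X. f x \<notin> X" using f(2) unfolding restr_hat_def by blast
  moreover have "f ` X \<subseteq> Y" using f(1) assms(2) by (auto simp: bij_betw_def)
  moreover have "inj_on f X" using f(1) assms(2) by (auto simp: bij_betw_def intro: inj_on_subset)
  ultimately show "X \<lesssim> Y - X" unfolding lepoll_def by blast
next
  assume L: "X \<lesssim> Y - X"
  define Z where "Z = Y - X"
  have Zinf: "infinite Z"
    using L assms(1) unfolding Z_def lepoll_def by (meson finite_imageD finite_subset)
  have XZ: "X \<lesssim> Z" using L Z_def by simp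
  have Y: "Y = X \<union> Z" "X \<inter> Z = {}" using assms(2) Z_def by auto
  obtain Z1 Z2 where Zs: "Z1 \<subseteq> Z" "Z2 \<subseteq> Z" "Z1 \<inter> Z2 = {}" "Z \<lesssim> Z1" "Z \<lesssim> Z2"
    using split_infinite[OF Zinf] by blast
  show "\<forall>R \<in> partial_bijections X. \<exists>f \<in> sym_group Y. restr_hat X f = R"
  proof
    fix R assume "R \<in> partial_bijections X"
    then obtain A B g where g: "A \<subseteq> X" "B \<subseteq> X" "bij_betw g A B" "R = {(x, g x) | x. x \<in> A}"
      unfolding partial_bijections_def by blast
    have "X - A \<lesssim> Z1"
      by (rule lepoll_trans[OF lepoll_trans[OF subset_imp_lepoll[OF Diff_subset] XZ] Zs(4)])
    then obtain e where e: "inj_on e (X - A)" "e ` (X - A) \<subseteq> Z1" unfolding lepoll_def by blast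
    define W where "W = e ` (X - A)"
    define T where "T = (X - B) \<union> (Z - W)"
    have "T \<lesssim> Z" unfolding T_def
      by (rule Un_lepoll_infinite[OF Zinf lepoll_trans[OF subset_imp_lepoll[OF Diff_subset] XZ]
            subset_imp_lepoll[OF Diff_subset]])
    moreover have "Z \<lesssim> T"
    proof -
      have "Z2 \<subseteq> T" using Zs e unfolding T_def W_def by blast
      thus ?thesis by (rule lepoll_trans[OF Zs(5) subset_imp_lepoll])
    qed
    ultimately have "Z \<approx> T" using lepoll_antisym by blast
    then obtain k where k: "bij_betw k Z T" unfolding eqpoll_def by blast
    define f where "f x = (if x \<in> A then g x else if x \<in> X then e x else if x \<in> Z then k x else x)" for x
    have WZ: "W \<subseteq> Z" using e Zs unfolding W_def by blast
    have fA: "\<And>x. x \<in> A \<Longrightarrow> f x = g x" and fXA: "\<And>x. x \<in> X - A \<Longrightarrow> f x = e x"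
      and fZ: "\<And>x. x \<in> Z \<Longrightarrow> f x = k x"
      using g(1) Y(2) unfolding f_def by auto
    have gA: "g ` A = B" "inj_on g A" using g(3) by (auto simp: bij_betw_def)
    have kZ: "k ` Z = T" "inj_on k Z" using k by (auto simp: bij_betw_def)
    have img: "f ` Y = Y"
    proof -
      have "f ` Y = f ` A \<union> f ` (X - A) \<union> f ` Z" using Y g(1) by blast
      also have "\<dots> = B \<union> W \<union> T"
      proof -
        have "f ` A = g ` A" by (rule image_cong[OF refl fA])
        moreover have "f ` (X - A) = e ` (X - A)" by (rule image_cong[OF refl fXA])
        moreover have "f ` Z = k ` Z" by (rule image_cong[OF refl fZ])
        ultimately show ?thesis using gA kZ unfolding W_def by simp
      qed
      also have "\<dots> = Y" unfolding T_def using Y g(2) WZ by blast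
      finally show ?thesis .
    qed
    have inj: "inj_on f Y"
    proof (rule inj_onI)
      fix x y assume xy: "x \<in> Y" "y \<in> Y" "f x = f y"
      have regB: "\<And>u. u \<in> A \<Longrightarrow> f u \<in> B" using fA gA by blast
      have regW: "\<And>u. u \<in> X - A \<Longrightarrow> f u \<in> W" using fXA unfolding W_def by blast
      have regT: "\<And>u. u \<in> Z \<Longrightarrow> f u \<in> T" using fZ kZ by blast
      have d1: "B \<inter> W = {}" "B \<inter> T = {}" "W \<inter> T = {}"
        using g(2) WZ Y(2) unfolding T_def by blast+
      have yc: "y \<in> A \<or> y \<in> X - A \<or> y \<in> Z" using xy Y by blast
      consider "x \<in> A" | "x \<in> X - A" | "x \<in> Z" using xy Y by blast
      then show "x = y"
      proof cases
        case 1
        have fy: "f y \<in> B" using regB[OF 1] xy(3) by simp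
        have "y \<notin> X - A" using regW fy d1(1) by (meson disjoint_iff)
        moreover have "y \<notin> Z" using regT fy d1(2) by (meson disjoint_iff)
        ultimately have "y \<in> A" using yc by blast
        then show ?thesis using 1 xy fA gA by (metis inj_onD)
      next
        case 2
        have fy: "f y \<in> W" using regW[OF 2] xy(3) by simp
        have "y \<notin> A" using regB fy d1(1) by (meson disjoint_iff)
        moreover have "y \<notin> Z" using regT fy d1(3) by (meson disjoint_iff)
        ultimately have "y \<in> X - A" using yc by blast
        then show ?thesis using 2 xy fXA e by (metis inj_onD)
      next
        case 3
        have fy: "f y \<in> T" using regT[OF 3] xy(3) by simp
        have "y \<notin> A" using regB fy d1(2) by (meson disjoint_iff)
        moreover have "y \<notin> X - A" using regW fy d1(3) by (meson disjoint_iff)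
        ultimately have "y \<in> Z" using yc by blast
        then show ?thesis using 3 xy fZ kZ by (metis inj_onD)
      qed
    qed
    have "f \<in> sym_group Y" unfolding sym_group_def bij_betw_def using img inj by blast
    moreover have "restr_hat X f = R"
    proof -
      have key: "f x \<in> X \<longleftrightarrow> x \<in> A" if x: "x \<in> X" for x
      proof (cases "x \<in> A")
        case True
        have "g x \<in> B" using imageI[of x A g] True gA(1) by simp
        hence "f x \<in> B" using fA[OF True] by simp
        then show ?thesis using True g(2) by blast
      next
        case False
        have "e x \<in> Z1" using e(2) x False by blast
        then have "f x \<in> Z" using fXA x False Zs(1) by simp blast
        then show ?thesis using False Y(2) by blast
      qed
      show ?thesis unfolding restr_hat_def g(4)
      proof (rule set_eqI, rule iffI)
        fix p assume "p \<in> {(x, f x) |x. x \<in> X \<and> f x \<in> X}"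
        then obtain x where x: "p = (x, f x)" "x \<in> X" "f x \<in> X" by blast
        then have xA: "x \<in> A" using key by blast
        then have "p = (x, g x)" using x(1) fA by simp
        then show "p \<in> {(x, g x) |x. x \<in> A}" using xA by blast
      next
        fix p assume "p \<in> {(x, g x) |x. x \<in> A}"
        then obtain x where x: "p = (x, g x)" "x \<in> A" by blast
        have xX: "x \<in> X" using x(2) g(1) by blast
        have "f x \<in> X" using key[OF xX] x(2) by blast
        moreover have "p = (x, f x)" using x fA by simp
        ultimately show "p \<in> {(x, f x) |x. x \<in> X \<and> f x \<in> X}" using xX by blast
      qed
    qed
    ultimately show "\<exists>f \<in> sym_group Y. restr_hat X f = R" by blast
  qed
qed

end
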